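(* Let $q$ be a power of $2$, let $m\equiv2\pmod4$ with $m\ge6$, and let $n=q^m+1$. Then the largest coset leader modulo $n$ is $\delta_{1,n}=\frac{q(q-1)(q^m+1)}{2(q^2+1)}$, and $|C_{\delta_{1,n}}|=4$.
   Context: For $0\le s\le n-1$, $C_s=\{sq^i\bmod n:i\ge0\}$ is the $q$-cyclotomic coset of $s$ modulo $n$; its least element is its coset leader; $\delta_{i,n}$ denotes the $i$-th largest coset leader modulo $n$. *)

theory Defs
  imports Main
begin

definition cyc_coset :: "nat \<Rightarrow> nat \<Rightarrow> nat \<Rightarrow> nat set" where
  "cyc_coset q n s = {s * q ^ i mod n | i. True}"

definition is_coset_leader :: "nat \<Rightarrow> nat \<Rightarrow> nat \<Rightarrow> bool" where
  "is_coset_leader q n s \<longleftrightarrow> s < n \<and> s = Min (cyc_coset q n s)"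

definition largest_coset_leader :: "nat \<Rightarrow> nat \<Rightarrow> nat" where
  "largest_coset_leader q n = Max {s. is_coset_leader q n s}"

end

theory Submission
  imports Defs
begin


lemma A1:
  fixes g N q n D V :: nat
  assumes q: "q = 2*g+2" and n: "n = (q^2+1)*N" and D: "D = (g+1)*(2*g+1)*N"
    and V: "V = g*(q^3+q^2+q+1)+q+1"
  shows "D*q^4 = D + n*V"
  unfolding q n D V by algebra

lemma A2:
  fixes g N q n D :: nat
  assumes q: "q = 2*g+2" and n: "n = (q^2+1)*N" and D: "D = (g+1)*(2*g+1)*N"
  shows "g*n \<le> q*D"
proof -
  have "g*n = (4*g^3+8*g^2+5*g)*N" unfolding q n by algebra
  also have "\<dots> \<le> (4*g^3+10*g^2+8*g+2)*N" by (intro mult_right_mono) auto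
  also have "\<dots> = q*D" unfolding q D by algebra
  finally show ?thesis .
qed

lemma E:
  fixes g q :: nat
  assumes q: "q = 2*g+2"
  shows "(2*g+1)*(q^3+q^2+q+1) + 1 = q^4"
  unfolding q by algebra



lemma comb:
  fixes b :: "nat \<Rightarrow> bool" and m l :: nat
  assumes m: "m = 2*l"
  and anti: "\<And>i. b (i+m) = (\<not> b i)"
  and f1: "\<And>i. \<not>(\<not>b i \<and> \<not>b(i+1) \<and> \<not>b(i+2))"
  and f2: "\<And>i. \<not>(\<not>b i \<and> \<not>b(i+1) \<and> b(i+2) \<and> \<not>b(i+3))"
  and f3: "\<And>i. \<not>(b i \<and> b(i+1) \<and> b(i+2))"
  and f4: "\<And>i. \<not>(b i \<and> b(i+1) \<and> \<not>b(i+2) \<and> b(i+3))"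
  shows "\<exists>j. \<forall>k. \<not>b(j+4*k) \<and> \<not>b(j+4*k+1) \<and> b(j+4*k+2) \<and> b(j+4*k+3)"
proof -
  have "\<exists>i. b i = b (Suc i)"
  proof (rule ccontr)
    assume "\<not> ?thesis"
    then have alt: "\<And>i. b (Suc i) = (\<not> b i)" by blast
    have per: "b (i + 2*j) = b i" for i j
    proof (induction j)
      case 0 then show ?case by simp
    next
      case (Suc j)
      have "i + 2*Suc j = Suc (Suc (i+2*j))" by simp
      then have "b (i + 2*Suc j) = b (i+2*j)" by (simp only: alt not_not)
      then show ?case using Suc by simp
    qed
    have "b (0+m) = b 0" unfolding m by (rule per)
    with anti[of 0] show False by simp
  qed
  then obtain i where i: "b i = b (Suc i)" ..
  obtain j where j: "\<not>b j \<and> \<not>b(j+1)"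
  proof (cases "b i")
    case True
    then show ?thesis using that[of "i+m"] i anti[of i] anti[of "Suc i"] by simp
  next
    case False
    then show ?thesis using that[of i] i by simp
  qed
  have step: "b(j'+2) \<and> b(j'+3) \<and> \<not>b(j'+4) \<and> \<not>b(j'+5)" if h: "\<not>b j' \<and> \<not>b(j'+1)" for j'
  proof -
    have a: "b (j'+2)" using f1[of j'] h by blast
    have c: "b (j'+3)" using f2[of j'] h a by blast
    have d: "\<not> b (j'+4)" using f3[of "j'+2"] a c by (simp add: eval_nat_numeral)
    have e: "\<not> b (j'+5)" using f4[of "j'+2"] a c d by (simp add: eval_nat_numeral)
    show ?thesis using a c d e by simp
  qed
  have inv: "\<not>b(j+4*k) \<and> \<not>b(j+4*k+1)" for k
  proof (induction k)
    case 0 then show ?case using j by simp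
  next
    case (Suc k)
    from step[OF Suc] show ?case by (simp add: eval_nat_numeral)
  qed
  show ?thesis
  proof (intro exI allI)
    fix k
    show "\<not>b(j+4*k) \<and> \<not>b(j+4*k+1) \<and> b(j+4*k+2) \<and> b(j+4*k+3)"
      using inv[of k] step[OF inv[of k]] by (simp add: eval_nat_numeral)
  qed
qed



lemma w: fixes q t0 t1 t2 t3 t4 x0 x1 x2 x3 n :: nat
  assumes e0: "q * t0 = x0 * n + t1" and e1: "q * t1 = x1 * n + t2" and e2: "q * t2 = x2 * n + t3" and e3: "q * t3 = x3 * n + t4"
  shows "t0 * q^4 = t4 + n * (x0*q^3 + x1*q^2 + x2*q + x3)"
proof -
  have "t0 * q^4 = q^3 * (q*t0)" by (simp add: power_numeral eval_nat_numeral ac_simps)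
  also have "\<dots> = x0*n*q^3 + q^2*(q*t1)" unfolding e0 by (simp add: eval_nat_numeral algebra_simps)
  also have "\<dots> = x0*n*q^3 + x1*n*q^2 + q*(q*t2)" unfolding e1 by (simp add: eval_nat_numeral algebra_simps)
  also have "\<dots> = x0*n*q^3 + x1*n*q^2 + x2*n*q + q*t3" unfolding e2 by (simp add: eval_nat_numeral algebra_simps)
  also have "\<dots> = t4 + n * (x0*q^3 + x1*q^2 + x2*q + x3)" unfolding e3 by (simp add: algebra_simps)
  finally show ?thesis .
qed
lemma p1: fixes q g x0 x1 x2 x3 V W :: nat
  assumes "V \<le> W" "W = x0*q^3 + x1*q^2 + x2*q + x3" "V = g*(q^3+q^2+q+1)+q+1"
   "x0 = g" "x1 = g" "x2 = g" "x3 \<le> g+1" "q \<ge> 2"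
  shows False using assms by (simp add: algebra_simps)
lemma p3: fixes q g x0 x1 x2 x3 V W :: nat
  assumes "W + V + 1 \<le> q^4" "W = x0*q^3 + x1*q^2 + x2*q + x3" "V = g*(q^3+q^2+q+1)+q+1"
   "x0 = g+1" "x1 = g+1" "x2 = g+1" "g \<le> x3" "q \<ge> 2" "(2*g+1)*(q^3+q^2+q+1) + 1 = q^4"
  shows False using assms by (simp add: algebra_simps)
lemma p4: fixes q g x0 x1 x2 x3 V W :: nat
  assumes "W + V + 1 \<le> q^4" "W = x0*q^3 + x1*q^2 + x2*q + x3" "V = g*(q^3+q^2+q+1)+q+1"
   "x0 = g+1" "x1 = g+1" "x2 = g" "x3 = g+1" "(2*g+1)*(q^3+q^2+q+1) + 1 = q^4"
  shows False using assms by (simp add: algebra_simps)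

lemma modI: "r < (n::nat) \<Longrightarrow> (k*n + r) mod n = r" by simp

lemma gen_ineq: "X + Y \<le> T + Z \<Longrightarrow> (k+1)*2 \<le> Y \<Longrightarrow> X = D + Z \<Longrightarrow> D + k + 2 \<le> (T::nat)"
  by arith

lemma core:
  fixes g N q n D m l s :: nat
  assumes q: "q = 2*g+2" and n: "n = (q^2+1)*N" and N: "N \<ge> 1" and odd: "odd n"
    and D: "D = (g+1)*(2*g+1)*N" and qm: "q^m + 1 = n" and m: "m = 2*l"
    and lead: "is_coset_leader q n s"
  shows "s \<le> D"
proof (rule ccontr)
  assume "\<not> s \<le> D" hence sD: "D < s" by simp
  from lead have sn: "s < n" and smin: "s = Min (cyc_coset q n s)"
    unfolding is_coset_leader_def by auto
  have npos: "0 < n" using sn by simp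
  define t where "t i = s * q^i mod n" for i
  have fin: "finite (cyc_coset q n s)"
  proof (rule finite_subset)
    show "cyc_coset q n s \<subseteq> {..<n}" unfolding cyc_coset_def using npos by auto
  qed simp
  have tin: "t i \<in> cyc_coset q n s" for i unfolding t_def cyc_coset_def by auto
  have tge: "s \<le> t i" for i using Min_le[OF fin tin[of i]] smin by simp
  have tlt: "t i < n" for i unfolding t_def using npos by simp
  have tsuc: "t (Suc i) = q * t i mod n" for i unfolding t_def
    by (simp add: mod_mult_right_eq mult.commute mult.left_commute)
  have qm': "q^m = n - 1" using qm by simp
  have tm: "t (i+m) = n - t i" for i
  proof -
    have a1: "t (i+m) = (t i * q^m) mod n" unfolding t_def
      by (simp add: power_add mod_mult_left_eq mult.assoc)
    obtain u where u: "t i = Suc u" using tge[of i] sD by (cases "t i") auto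
    define w where "w = n - t i"
    have nw: "n = Suc u + w" unfolding w_def using tlt[of i] u by simp
    have a2: "t i * q^m = u * n + w" unfolding qm' nw u by (simp add: algebra_simps)
    have a3: "w < n" unfolding nw by simp
    show ?thesis unfolding a1 a2 w_def[symmetric] using a3 by (rule modI)
  qed
  have tlow: "D < t i" for i using tge[of i] sD by simp
  have tup: "t i < n - D" for i using tlow[of "i+m"] tm[of i] by simp
  define x where "x i = q * t i div n" for i
  have dig: "q * t i = x i * n + t (Suc i)" for i
    unfolding x_def tsuc by simp
  define b where "b i = (n < 2 * t i)" for i
  have A2': "g*n \<le> q*D" using A2[OF q n D] .
  have xb: "x i = (if b i then g+1 else g)" for i
  proof (cases "b i")
    case True
    have "(g+1)*n \<le> (g+1)*(2*t i)" using True unfolding b_def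
      by (intro mult_le_mono2) simp
    also have "\<dots> = q * t i" unfolding q by (simp add: algebra_simps)
    finally have "(g+1)*n \<le> q * t i" .
    moreover have "q * t i < (g+2)*n"
    proof -
      have "q * t i < q * (n - D)" using tup[of i] q by (subst mult_less_cancel1) simp
      also have "\<dots> = q*n - q*D" by (simp add: diff_mult_distrib2)
      also have "\<dots> \<le> q*n - g*n" using A2' by simp
      also have "\<dots> = (g+2)*n" unfolding q by (simp add: algebra_simps)
      finally show ?thesis .
    qed
    ultimately have "x i = g+1" unfolding x_def
      by (intro div_nat_eqI) (simp_all add: algebra_simps)
    then show ?thesis using True by simp
  next
    case False
    have "2 * t i \<noteq> n" using odd by auto
    with False have lt: "2 * t i < n" unfolding b_def by simp
    have "q * t i < (g+1)*n"
    proof -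
      have "q * t i = (g+1) * (2 * t i)" unfolding q by (simp add: algebra_simps)
      also have "\<dots> < (g+1) * n" using lt by (subst mult_less_cancel1) simp
      finally show ?thesis .
    qed
    moreover have "g * n \<le> q * t i"
      using A2' tlow[of i] q by (meson le_trans less_imp_le_nat mult_le_mono2)
    ultimately have "x i = g" unfolding x_def
      by (intro div_nat_eqI) (simp_all add: algebra_simps)
    then show ?thesis using False by simp
  qed
  have anti: "b (i+m) = (\<not> b i)" for i
  proof -
    have "2 * t i \<noteq> n" using odd by auto
    then show ?thesis unfolding b_def tm using tlt[of i] by auto
  qed
  define W where "W j = x j*q^3 + x(j+1)*q^2 + x(j+2)*q + x(j+3)" for j
  have win: "t j * q^4 = t (j+4) + n * W j" for j
  proof -
    have e0: "q * t j = x j * n + t (j+1)" using dig[of j] by (simp add: eval_nat_numeral)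
    have e1: "q * t (j+1) = x (j+1) * n + t (j+2)" using dig[of "j+1"] by (simp add: eval_nat_numeral)
    have e2: "q * t (j+2) = x (j+2) * n + t (j+3)" using dig[of "j+2"] by (simp add: eval_nat_numeral)
    have e3: "q * t (j+3) = x (j+3) * n + t (j+4)" using dig[of "j+3"] by (simp add: eval_nat_numeral)
    show ?thesis unfolding W_def by (rule w[OF e0 e1 e2 e3])
  qed
  define V where "V = g*(q^3+q^2+q+1)+q+1"
  have A1': "D*q^4 = D + n*V" using A1[OF q n D V_def] .
  have E': "(2*g+1)*(q^3+q^2+q+1) + 1 = q^4" using E[OF q] .
  have lowW: "V \<le> W j" for j
  proof (rule ccontr)
    assume "\<not> V \<le> W j"
    hence "W j + 1 \<le> V" by simp
    hence "n * (W j + 1) \<le> n * V" by (rule mult_le_mono2)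
    hence "t j * q^4 < D * q^4" using win[of j] tlt[of "j+4"] A1' by (simp add: algebra_simps)
    hence "t j < D" by simp
    with tlow[of j] show False by simp
  qed
  have upW: "W j + V + 1 \<le> q^4" for j
  proof (rule ccontr)
    assume "\<not> W j + V + 1 \<le> q^4"
    hence "q^4 \<le> W j + V" by simp
    hence h1: "n * q^4 \<le> n * W j + n * V" by (metis add_mult_distrib2 mult_le_mono2)
    have h2: "(n - D)*q^4 + D*q^4 = n*q^4" using tup[of 0] by (simp add: add_mult_distrib[symmetric])
    have h3: "1 + n * W j \<le> t j * q^4" using win[of j] tlow[of "j+4"] by simp
    have Dpos: "0 < D" using D N by simp
    have "(n - D)*q^4 < t j * q^4" using h1 h2 h3 A1' Dpos by linarith
    hence "n - D < t j" by simp
    with tup[of j] show False by simp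
  qed
  have xg: "x i = g" if "\<not> b i" for i using xb[of i] that by simp
  have xg1: "x i = g+1" if "b i" for i using xb[of i] that by simp
  have q2: "q \<ge> 2" using q by simp
  have f1: "\<not>(\<not>b i \<and> \<not>b(i+1) \<and> \<not>b(i+2))" for i
  proof
    assume h: "\<not>b i \<and> \<not>b(i+1) \<and> \<not>b(i+2)"
    have "x (i+3) \<le> g+1" using xb[of "i+3"] by simp
    then show False using p1[OF lowW[of i] W_def V_def xg[of i] xg[of "i+1"] xg[of "i+2"] _ q2] h by blast
  qed
  have f2: "\<not>(\<not>b i \<and> \<not>b(i+1) \<and> b(i+2) \<and> \<not>b(i+3))" for i
  proof
    assume h: "\<not>b i \<and> \<not>b(i+1) \<and> b(i+2) \<and> \<not>b(i+3)"
    have "x i = g" "x (i+1) = g" "x (i+2) = g+1" "x (i+3) = g" using h xg xg1 by auto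
    then have "W i + 1 = V" unfolding W_def V_def by (simp add: algebra_simps)
    then show False using lowW[of i] by simp
  qed
  have f3: "\<not>(b i \<and> b(i+1) \<and> b(i+2))" for i
  proof
    assume h: "b i \<and> b(i+1) \<and> b(i+2)"
    have "g \<le> x (i+3)" using xb[of "i+3"] by simp
    then show False using p3[OF upW[of i] W_def V_def xg1[of i] xg1[of "i+1"] xg1[of "i+2"] _ q2 E'] h by blast
  qed
  have f4: "\<not>(b i \<and> b(i+1) \<and> \<not>b(i+2) \<and> b(i+3))" for i
  proof
    assume h: "b i \<and> b(i+1) \<and> \<not>b(i+2) \<and> b(i+3)"
    then show False using p4[OF upW[of i] W_def V_def xg1[of i] xg1[of "i+1"] xg[of "i+2"] xg1[of "i+3"] E'] h by blast
  qed
  obtain j where j: "\<And>k. \<not>b(j+4*k) \<and> \<not>b(j+4*k+1) \<and> b(j+4*k+2) \<and> b(j+4*k+3)"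
    using comb[OF m anti f1 f2 f3 f4] by blast
  have WV: "W (j+4*k) = V" for k
  proof -
    have "x (j+4*k) = g" "x (j+4*k+1) = g" "x (j+4*k+2) = g+1" "x (j+4*k+3) = g+1"
      using j[of k] xg xg1 by auto
    then show ?thesis unfolding W_def V_def by (simp add: algebra_simps)
  qed
  have grow: "D + k + 1 \<le> t (j+4*k)" for k
  proof (induction k)
    case 0 then show ?case using tlow[of j] by simp
  next
    case (Suc k)
    have eq: "t (j+4*k) * q^4 = t (j+4*Suc k) + n * V" using win[of "j+4*k"] WV[of k] by (simp add: ac_simps)
    have "(2::nat)^4 \<le> q^4" using q by (intro power_mono) simp_all
    hence q4: "2 \<le> q^4" by simp
    have "(D + k + 1) * q^4 \<le> t (j+4*k) * q^4" using Suc.IH by (rule mult_le_mono1)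
    hence h1: "D*q^4 + (k+1)*q^4 \<le> t (j+4*Suc k) + n * V" using eq by (simp add: algebra_simps)
    have h2: "(k+1)*2 \<le> (k+1)*q^4" using q4 by (rule mult_le_mono2)
    have "D + k + 2 \<le> t (j+4*Suc k)" by (rule gen_ineq[OF h1 h2 A1'])
    then show ?case by simp
  qed
  show False using grow[of n] tlt[of "j+4*n"] by simp
qed



lemma odd_dvd: "(x+1::int) dvd x^(2*j+1) + 1"
proof (induction j)
  case 0 then show ?case by simp
next
  case (Suc j)
  have p: "x^(2*Suc j+1) = x^2 * x^(2*j+1)"
    by (simp add: power_add[symmetric])
  have "x^(2*Suc j+1) + 1 = x^2*(x^(2*j+1)+1) - (x+1)*(x-1)"
    unfolding p by (simp add: algebra_simps power2_eq_square)
  moreover have "(x+1) dvd x^2*(x^(2*j+1)+1) - (x+1)*(x-1)"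
  proof (rule dvd_diff)
    show "(x+1) dvd x^2*(x^(2*j+1)+1)" using Suc.IH by (rule dvd_mult)
  qed simp
  ultimately show ?case by simp
qed

lemma odd_dvd_nat: "odd l \<Longrightarrow> (x+1::nat) dvd x^l + 1"
proof -
  assume "odd l"
  then obtain j where l: "l = 2*j+1" by (metis oddE)
  have h: "(int x+1) dvd (int x)^(2*j+1)+1" by (rule odd_dvd)
  have "int (x+1) dvd int (x^l+1)" using h unfolding l by (simp only: of_nat_add of_nat_power of_nat_1)
  then show ?thesis by (simp only: of_nat_dvd_iff)
qed

lemma coset_D:
  fixes g N q n a :: nat
  assumes q: "q = 2*g+2" and n: "n = (q^2+1)*N" and N: "N \<ge> 1" and a: "a = (g+1)*(2*g+1)"
  shows "cyc_coset q n (N*a) = {N*a, N*(a+1), N*(a+2*g+3), N*(a+2*g+2)}"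
proof -
  have lt: "N*c < n" if "c \<le> a+2*g+3" for c
  proof -
    have "c < q^2+1" using that unfolding a q by (simp add: algebra_simps power2_eq_square)
    then have "c*N < (q^2+1)*N" using N by (intro mult_strict_right_mono) simp_all
    then show ?thesis unfolding n by (simp add: mult.commute)
  qed
  have t1: "(N*a)*q mod n = N*(a+1)"
  proof -
    have eq: "(N*a)*q = g*n + N*(a+1)" unfolding n q a by algebra
    show ?thesis unfolding eq by (intro modI lt) simp
  qed
  have t2: "(N*(a+1))*q mod n = N*(a+2*g+3)"
  proof -
    have eq: "(N*(a+1))*q = g*n + N*(a+2*g+3)" unfolding n q a by algebra
    show ?thesis unfolding eq by (intro modI lt) simp
  qed
  have t3: "(N*(a+2*g+3))*q mod n = N*(a+2*g+2)"
  proof -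
    have eq: "(N*(a+2*g+3))*q = (g+1)*n + N*(a+2*g+2)" unfolding n q a by algebra
    show ?thesis unfolding eq by (intro modI lt) simp
  qed
  have t4: "(N*(a+2*g+2))*q mod n = N*a"
  proof -
    have eq: "(N*(a+2*g+2))*q = (g+1)*n + N*a" unfolding n q a by algebra
    show ?thesis unfolding eq by (intro modI lt) simp
  qed
  define c1 where "c1 = N*a"
  define c2 where "c2 = N*(a+1)"
  define c3 where "c3 = N*(a+2*g+3)"
  define c4 where "c4 = N*(a+2*g+2)"
  have u1: "c1*q mod n = c2" unfolding c1_def c2_def by (rule t1)
  have u2: "c2*q mod n = c3" unfolding c2_def c3_def by (rule t2)
  have u3: "c3*q mod n = c4" unfolding c3_def c4_def by (rule t3)
  have u4: "c4*q mod n = c1" unfolding c4_def c1_def by (rule t4)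
  define r where "r i = N*a*q^i mod n" for i
  have st: "r (Suc i) = r i * q mod n" for i
  proof -
    have e: "N*a*q^(Suc i) = (N*a*q^i)*q" by (simp add: ac_simps)
    show ?thesis unfolding r_def e by (rule mod_mult_left_eq[symmetric])
  qed
  have r0: "r 0 = c1" unfolding r_def c1_def using lt[of a] by simp
  have sub: "r i = c1 \<or> r i = c2 \<or> r i = c3 \<or> r i = c4" for i
  proof (induction i)
    case 0 then show ?case using r0 by blast
  next
    case (Suc i)
    then show ?case
    proof (elim disjE)
      assume "r i = c1" then show ?thesis unfolding st using u1 by blast
    next
      assume "r i = c2" then show ?thesis unfolding st using u2 by blast
    next
      assume "r i = c3" then show ?thesis unfolding st using u3 by blast
    next
      assume "r i = c4" then show ?thesis unfolding st using u4 by blast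
    qed
  qed
  have r1: "r 1 = c2" using st[of 0] r0 u1 by simp
  have r2: "r 2 = c3" using st[of 1] r1 u2 by (simp add: numeral_2_eq_2)
  have r3: "r 3 = c4" using st[of 2] r2 u3 by (simp add: numeral_3_eq_3)
  have cc: "cyc_coset q n (N*a) = range r" unfolding cyc_coset_def r_def by auto
  have "range r = {c1, c2, c3, c4}"
  proof
    show "range r \<subseteq> {c1, c2, c3, c4}" using sub by blast
  next
    show "{c1, c2, c3, c4} \<subseteq> range r" using r0 r1 r2 r3 by (metis empty_subsetI insert_subset rangeI)
  qed
  then show ?thesis unfolding cc c1_def c2_def c3_def c4_def .
qed



lemma card4: "(w::nat) < x \<Longrightarrow> x < y \<Longrightarrow> y < z \<Longrightarrow> card {w, x, z, y} = 4"
  by simp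

theorem lemma6:
  fixes q m k n :: nat
  assumes "q = 2 ^ k" and "k \<ge> 1"
    and "m mod 4 = 2" and "m \<ge> 6"
    and "n = q ^ m + 1"
  shows "largest_coset_leader q n = q * (q - 1) * (q ^ m + 1) div (2 * (q ^ 2 + 1))
         \<and> card (cyc_coset q n (largest_coset_leader q n)) = 4"
proof -
  define g where "g = 2^(k-1) - (1::nat)"
  have q: "q = 2*g+2"
  proof -
    have "q = 2 * 2^(k-1)" using assms(1,2) by (simp add: power_Suc[symmetric])
    moreover have "(1::nat) \<le> 2^(k-1)" by simp
    ultimately show ?thesis unfolding g_def by linarith
  qed
  define l where "l = m div 2"
  have m: "m = 2*l" and lodd: "odd l" unfolding l_def using assms(3) by presburger+
  have dvd: "(q^2+1) dvd (q^m+1)"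
  proof -
    have "q^m = (q^2)^l" by (simp add: m power_mult)
    then show ?thesis using odd_dvd_nat[OF lodd, of "q^2"] by simp
  qed
  define N where "N = (q^m+1) div (q^2+1)"
  have nN: "n = (q^2+1)*N" unfolding N_def assms(5) using dvd by (metis dvd_mult_div_cancel)
  have N1: "N \<ge> 1" using nN assms(5) by (cases N) auto
  have "even q" using q by simp
  moreover have "m \<noteq> 0" using assms(4) by simp
  ultimately have "even (q^m)" by simp
  then have oddn: "odd n" using assms(5) by simp
  define a where "a = (g+1)*(2*g+1)"
  define D where "D = N*a"
  have D': "D = (g+1)*(2*g+1)*N" unfolding D_def a_def by simp
  let ?S = "{N*a, N*(a+1), N*(a+2*g+3), N*(a+2*g+2)}"
  have cos: "cyc_coset q n D = ?S" unfolding D_def using coset_D[OF q nN N1 a_def] .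
  have i1: "N*a \<le> N*(a+1)" by (rule mult_le_mono2) simp
  have i2: "N*a \<le> N*(a+2*g+3)" by (rule mult_le_mono2) simp
  have i3: "N*a \<le> N*(a+2*g+2)" by (rule mult_le_mono2) simp
  have MinS: "Min ?S = D" unfolding D_def
  proof (rule Min_eqI)
    fix y assume "y \<in> ?S"
    then show "N*a \<le> y" using i1 i2 i3 by blast
  qed simp_all
  have Dlt: "D < n"
  proof -
    have "a < q^2+1" unfolding a_def q by (simp add: algebra_simps power2_eq_square)
    then have "a*N < (q^2+1)*N" using N1 by (intro mult_strict_right_mono) simp_all
    then show ?thesis unfolding D_def nN by (simp add: mult.commute)
  qed
  have leadD: "is_coset_leader q n D" unfolding is_coset_leader_def using Dlt cos MinS by simp
  have le: "s \<le> D" if "is_coset_leader q n s" for s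
    using core[OF q nN N1 oddn D' _ m that] assms(5) by simp
  have fin: "finite {s. is_coset_leader q n s}"
    by (rule finite_subset[of _ "{..<n}"]) (auto simp: is_coset_leader_def)
  have L: "largest_coset_leader q n = D" unfolding largest_coset_leader_def
    by (rule Max_eqI) (use fin le leadD in auto)
  have R: "q * (q - 1) * (q ^ m + 1) div (2 * (q ^ 2 + 1)) = D"
  proof -
    have qa: "q*(q-1) = 2*a" unfolding q a_def by simp
    have "q * (q - 1) * (q ^ m + 1) = 2*a*((q^2+1)*N)" using nN assms(5) qa by simp
    also have "\<dots> = (2 * (q ^ 2 + 1)) * D" unfolding D_def by (simp only: ac_simps)
    finally have "q * (q - 1) * (q ^ m + 1) = (2 * (q ^ 2 + 1)) * D" .
    then show ?thesis by (simp only:) (rule nonzero_mult_div_cancel_left, simp)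
  qed
  have c1: "N*a < N*(a+1)" using N1 by (intro mult_less_mono2) simp_all
  have c2: "N*(a+1) < N*(a+2*g+2)" using N1 by (intro mult_less_mono2) simp_all
  have c3: "N*(a+2*g+2) < N*(a+2*g+3)" using N1 by (intro mult_less_mono2) simp_all
  have C: "card ?S = 4" using card4[OF c1 c2 c3] .
  show ?thesis using L R C cos by simp
qed

end
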